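(* Let $\mu,\sigma$ be non-uniformly stable matchings in $G$ and let $F=(\mu\setminus\sigma)\cup(\sigma\setminus\mu)$. Let $(v_1,\dots,v_{k+1})$ be a cycle in $F$ (i.e., $v_1,\dots,v_k$ distinct, $v_{k+1}=v_1$, and $e_\ell:=\{v_\ell,v_{\ell+1}\}\in F$ for all $\ell\in[k]$), and set $e_0:=e_k$. Then one of the following holds: (C1) $e_\ell\succ_{v_\ell}e_{\ell-1}$ for every $\ell\in[k]$; (C2) $e_{\ell-1}\succ_{v_\ell}e_\ell$ for every $\ell\in[k]$; (C3) $e_\ell\sim_{v_\ell}e_{\ell-1}$ for every $\ell\in[k]$.
   Context: Setting: $G=(V,E)$ is a finite simple bipartite graph with $V=V_1\sqcup V_2$, every edge joining a vertex of $V_1$ to a vertex of $V_2$; an edge is identified with the set of its two endpoints. $E$ is partitioned into $E_1,E_2$. For $F\subseteq E$ and $v\in V$, $F(v)$ is the set of edges of $F$ incident to $v$. For every $v\in V$ there is a transitive and complete binary relation $\succsim_v$ on $E(v)\cup\{\emptyset\}$ with $e\succsim_v\emptyset$ and $\emptyset\not\succsim_v e$ for all $e\in E(v)$; $e\succ_v f$ means $e\succsim_v f$ and $f\not\succsim_v e$; $e\sim_v f$ means both $e\succsim_v f$ and $f\succsim_v e$. A matching is $\mu\subseteq E$ with $|\mu(v)|\le1$ for all $v$; $\mu(v)$ denotes the edge of $\mu$ at $v$, or $\emptyset$. An edge $e\in E\setminus\mu$ weakly blocks $\mu$ if $e\succsim_v\mu(v)$ for every $v\in e$; it strongly blocks $\mu$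 if additionally $e\succ_w\mu(w)$ for some $w\in e$. $\mu$ is non-uniformly stable if no edge of $E_1\setminus\mu$ weakly blocks $\mu$ and no edge of $E_2\setminus\mu$ strongly blocks $\mu$. $[k]=\{1,\dots,k\}$. *)

theory Defs
  imports Main
begin

text \<open>Edges are 2-element vertex sets; the empty set {} plays the role of the
  "unmatched" outcome written \<emptyset> in the paper. A preference profile is
  pref :: vertex => (vertex set) => (vertex set) => bool, where pref v e f means e \<succeq>_v f.\<close>

definition edges_at :: "'v set set \<Rightarrow> 'v \<Rightarrow> 'v set set" where
  "edges_at F v = {e \<in> F. v \<in> e}"

definition setting ::
  "'v set \<Rightarrow> 'v set \<Rightarrow> 'v set set \<Rightarrow> 'v set set \<Rightarrow> 'v set set
   \<Rightarrow> ('v \<Rightarrow> 'v set \<Rightarrow> 'v set \<Rightarrow> bool) \<Rightarrow> bool" where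
  "setting V1 V2 E E1 E2 pref \<longleftrightarrow>
     finite (V1 \<union> V2) \<and> V1 \<inter> V2 = {} \<and>
     E \<subseteq> {{a, b} | a b. a \<in> V1 \<and> b \<in> V2} \<and>
     E1 \<union> E2 = E \<and> E1 \<inter> E2 = {} \<and>
     (\<forall>v \<in> V1 \<union> V2.
        (\<forall>e \<in> edges_at E v \<union> {{}}. \<forall>f \<in> edges_at E v \<union> {{}}. pref v e f \<or> pref v f e) \<and>
        (\<forall>e \<in> edges_at E v \<union> {{}}. \<forall>f \<in> edges_at E v \<union> {{}}. \<forall>g \<in> edges_at E v \<union> {{}}.
            pref v e f \<longrightarrow> pref v f g \<longrightarrow> pref v e g) \<and>
        (\<forall>e \<in> edges_at E v. pref v e {} \<and> \<not> pref v {} e))"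

definition strict_pref :: "('v \<Rightarrow> 'v set \<Rightarrow> 'v set \<Rightarrow> bool) \<Rightarrow> 'v \<Rightarrow> 'v set \<Rightarrow> 'v set \<Rightarrow> bool" where
  "strict_pref pref v e f \<longleftrightarrow> pref v e f \<and> \<not> pref v f e"

definition indiff :: "('v \<Rightarrow> 'v set \<Rightarrow> 'v set \<Rightarrow> bool) \<Rightarrow> 'v \<Rightarrow> 'v set \<Rightarrow> 'v set \<Rightarrow> bool" where
  "indiff pref v e f \<longleftrightarrow> pref v e f \<and> pref v f e"

definition matching :: "'v set set \<Rightarrow> 'v set set \<Rightarrow> bool" where
  "matching E \<mu> \<longleftrightarrow> \<mu> \<subseteq> E \<and> (\<forall>v. card (edges_at \<mu> v) \<le> 1)"

definition partner_edge :: "'v set set \<Rightarrow> 'v \<Rightarrow> 'v set" where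
  "partner_edge \<mu> v = (if \<exists>e \<in> \<mu>. v \<in> e then (THE e. e \<in> \<mu> \<and> v \<in> e) else {})"

definition weakly_blocks ::
  "('v \<Rightarrow> 'v set \<Rightarrow> 'v set \<Rightarrow> bool) \<Rightarrow> 'v set set \<Rightarrow> 'v set set \<Rightarrow> 'v set \<Rightarrow> bool" where
  "weakly_blocks pref E \<mu> e \<longleftrightarrow> e \<in> E - \<mu> \<and> (\<forall>v \<in> e. pref v e (partner_edge \<mu> v))"

definition strongly_blocks ::
  "('v \<Rightarrow> 'v set \<Rightarrow> 'v set \<Rightarrow> bool) \<Rightarrow> 'v set set \<Rightarrow> 'v set set \<Rightarrow> 'v set \<Rightarrow> bool" where
  "strongly_blocks pref E \<mu> e \<longleftrightarrow> weakly_blocks pref E \<mu> e \<and>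
     (\<exists>w \<in> e. strict_pref pref w e (partner_edge \<mu> w))"

definition nu_stable ::
  "'v set set \<Rightarrow> 'v set set \<Rightarrow> 'v set set \<Rightarrow> ('v \<Rightarrow> 'v set \<Rightarrow> 'v set \<Rightarrow> bool) \<Rightarrow> 'v set set \<Rightarrow> bool" where
  "nu_stable E E1 E2 pref \<mu> \<longleftrightarrow> matching E \<mu> \<and>
     (\<forall>e \<in> E1 - \<mu>. \<not> weakly_blocks pref E \<mu> e) \<and>
     (\<forall>e \<in> E2 - \<mu>. \<not> strongly_blocks pref E \<mu> e)"

end

theory Submission
  imports Defs
begin

lemma setting_finite:
  assumes "setting V1 V2 E E1 E2 pref" shows "finite E"
proof -
  have "E \<subseteq> (\<lambda>(a,b). {a,b}) ` ((V1 \<union> V2) \<times> (V1 \<union> V2))"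
    using assms unfolding setting_def by auto
  moreover have "finite ((V1 \<union> V2) \<times> (V1 \<union> V2))" using assms unfolding setting_def by auto
  ultimately show ?thesis using finite_surj by blast
qed

lemma match_unique:
  assumes "matching E s" "finite E" "e \<in> s" "g \<in> s" "v \<in> e" "v \<in> g"
  shows "e = g"
proof -
  have "edges_at s v \<subseteq> E" using assms(1) unfolding matching_def edges_at_def by auto
  hence fin: "finite (edges_at s v)" using assms(2) finite_subset by blast
  have c: "card (edges_at s v) \<le> 1" using assms(1) unfolding matching_def by blast
  have "e \<in> edges_at s v" "g \<in> edges_at s v" using assms unfolding edges_at_def by auto
  thus ?thesis using c card_le_Suc0_iff_eq[OF fin] by auto
qed

lemma partner_eq:
  assumes "matching E s" "finite E" "e \<in> s" "v \<in> e"
  shows "partner_edge s v = e"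
proof -
  have "(THE x. x \<in> s \<and> v \<in> x) = e"
  proof (rule the_equality)
    show "e \<in> s \<and> v \<in> e" using assms by simp
  next
    fix x assume "x \<in> s \<and> v \<in> x"
    thus "x = e" using match_unique[OF assms(1,2), of x e v] assms by simp
  qed
  thus ?thesis using assms unfolding partner_edge_def by auto
qed

lemma partner_in:
  assumes "matching E s" "finite E"
  shows "partner_edge s v \<in> edges_at E v \<union> {{}}"
proof (cases "\<exists>e \<in> s. v \<in> e")
  case True
  then obtain e where "e \<in> s" "v \<in> e" by blast
  thus ?thesis using partner_eq[OF assms] assms unfolding matching_def edges_at_def by auto
next
  case False thus ?thesis unfolding partner_edge_def by auto
qed

lemma set_V:
  assumes "setting V1 V2 E E1 E2 pref" "x \<in> E" "v \<in> x"
  shows "v \<in> V1 \<union> V2"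
proof -
  have "E \<subseteq> {{a, b} | a b. a \<in> V1 \<and> b \<in> V2}" using assms(1) unfolding setting_def by blast
  thus ?thesis using assms(2,3) by blast
qed

lemma set_two:
  assumes "setting V1 V2 E E1 E2 pref" "{v} \<in> E"
  shows False
proof -
  have "E \<subseteq> {{a, b} | a b. a \<in> V1 \<and> b \<in> V2}" "V1 \<inter> V2 = {}"
    using assms(1) unfolding setting_def by blast+
  thus ?thesis using assms(2) by (auto simp: doubleton_eq_iff)
qed

lemma set_compl:
  assumes "setting V1 V2 E E1 E2 pref" "v \<in> V1 \<union> V2"
    "x \<in> edges_at E v \<union> {{}}" "y \<in> edges_at E v \<union> {{}}"
  shows "pref v x y \<or> pref v y x"
proof -
  have "\<forall>v \<in> V1 \<union> V2. (\<forall>e \<in> edges_at E v \<union> {{}}. \<forall>f \<in> edges_at E v \<union> {{}}. pref v e f \<or> pref v f e)"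
    using assms(1) unfolding setting_def by blast
  thus ?thesis using assms(2-4) by blast
qed

lemma step:
  assumes set: "setting V1 V2 E E1 E2 pref" and st: "nu_stable E E1 E2 pref s"
    and "f \<in> E" "f \<notin> s" "f = {a,b}" "g = partner_edge s a" "h = partner_edge s b"
    and sp: "strict_pref pref a f g"
  shows "strict_pref pref b h f"
proof -
  have fin: "finite E" using setting_finite[OF set] .
  have m: "matching E s" using st unfolding nu_stable_def by auto
  have bV: "b \<in> V1 \<union> V2" using set_V[OF set assms(3)] assms(5) by blast
  have hin: "h \<in> edges_at E b \<union> {{}}" using partner_in[OF m fin] assms(7) by auto
  have fin2: "f \<in> edges_at E b \<union> {{}}" using assms(3,5) unfolding edges_at_def by auto
  have "\<not> (pref a f g \<and> pref b f h)"
  proof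
    assume H: "pref a f g \<and> pref b f h"
    hence wb: "weakly_blocks pref E s f" using assms unfolding weakly_blocks_def by auto
    hence "strongly_blocks pref E s f" using sp assms unfolding strongly_blocks_def by auto
    moreover have "E1 \<union> E2 = E" using set unfolding setting_def by blast
    hence "f \<in> E1 \<or> f \<in> E2" using assms(3) by blast
    ultimately show False using st wb assms(4) unfolding nu_stable_def by auto
  qed
  hence "\<not> pref b f h" using sp unfolding strict_pref_def by auto
  moreover have "pref b f h \<or> pref b h f" using set_compl[OF set bV fin2 hin] .
  ultimately show ?thesis unfolding strict_pref_def by auto
qed

lemma cyc:
  fixes P :: "nat \<Rightarrow> bool"
  assumes "\<forall>l\<in>{1..<k}. P l \<longrightarrow> P (Suc l)" "P k \<longrightarrow> P 1" "P i" "i \<in> {1..k}"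
  shows "\<forall>j\<in>{1..k}. P j"
proof -
  have fw: "P j" if "P i'" "i' \<le> j" "j \<le> k" "1 \<le> i'" for i' j
    using that
  proof (induction j)
    case 0 thus ?case by auto
  next
    case (Suc j)
    show ?case
    proof (cases "i' = Suc j")
      case True thus ?thesis using Suc.prems by simp
    next
      case False
      hence "i' \<le> j" using Suc.prems by simp
      hence "P j" using Suc by simp
      moreover have "j \<in> {1..<k}" using \<open>i' \<le> j\<close> Suc.prems by simp
      ultimately show ?thesis using assms(1) by blast
    qed
  qed
  have "P k" using fw[of i k] assms by auto
  hence "P 1" using assms by auto
  thus ?thesis using fw[of 1] by auto
qed

theorem lemma5p2:
  fixes V1 V2 :: "'v set" and E E1 E2 \<mu> \<sigma> :: "'v set set"
    and pref :: "'v \<Rightarrow> 'v set \<Rightarrow> 'v set \<Rightarrow> bool"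
    and k :: nat and vs :: "nat \<Rightarrow> 'v"
  assumes "setting V1 V2 E E1 E2 pref"
    and "nu_stable E E1 E2 pref \<mu>" and "nu_stable E E1 E2 pref \<sigma>"
    and "F = (\<mu> - \<sigma>) \<union> (\<sigma> - \<mu>)"
    and "inj_on vs {1..k}" and "vs (k + 1) = vs 1"
    and "\<forall>l \<in> {1..k}. {vs l, vs (l + 1)} \<in> F"
    and "e = (\<lambda>l. if l = 0 then {vs k, vs (k + 1)} else {vs l, vs (l + 1)})"
  shows "(\<forall>l \<in> {1..k}. strict_pref pref (vs l) (e l) (e (l - 1))) \<or>
         (\<forall>l \<in> {1..k}. strict_pref pref (vs l) (e (l - 1)) (e l)) \<or>
         (\<forall>l \<in> {1..k}. indiff pref (vs l) (e l) (e (l - 1)))"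
proof -
  note set = assms(1)
  have fin: "finite E" using setting_finite[OF set] .
  have mm: "matching E \<mu>" "matching E \<sigma>" using assms(2,3) unfolding nu_stable_def by auto
  have FE: "F \<subseteq> E" using mm assms(4) unfolding matching_def by auto
  have eF: "e l \<in> F" if "l \<in> {1..k}" for l using that assms(7,8) by auto
  have e0: "e 0 = e k" using assms(8) by auto
  have compl: "pref (vs l) (e l) (e (l - 1)) \<or> pref (vs l) (e (l - 1)) (e l)" if "l \<in> {1..k}" for l
  proof -
    have l1: "e (l - 1) \<in> F"
    proof (cases "l = 1")
      case True thus ?thesis using eF[of k] e0 that by auto
    next
      case False hence "l - 1 \<in> {1..k}" using that by auto
      thus ?thesis using eF by blast
    qed
    have "vs l \<in> e l" "vs l \<in> e (l - 1)" using assms(6,8) that by auto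
    hence "e l \<in> edges_at E (vs l)" "e (l - 1) \<in> edges_at E (vs l)"
      using eF[OF that] l1 FE unfolding edges_at_def by auto
    moreover have "vs l \<in> V1 \<union> V2" using \<open>e l \<in> edges_at E (vs l)\<close> set_V[OF set]
      unfolding edges_at_def by blast
    ultimately show ?thesis using set_compl[OF set] by blast
  qed
  show ?thesis
  proof (cases "k \<ge> 3")
    case False
    hence "k = 0 \<or> k = 1 \<or> k = 2" by auto
    moreover have "k \<noteq> 1"
    proof
      assume "k = 1"
      hence "{vs 1} \<in> E" using assms(6,7) FE by auto
      thus False using set_two[OF set] by blast
    qed
    moreover have "k = 2 \<Longrightarrow> ?thesis"
    proof -
      assume k2: "k = 2"
      have "e 1 = e 2" "e 0 = e 2" using k2 assms(6,8) by (auto simp: numeral_2_eq_2 numeral_3_eq_3)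
      hence "e l = e (l - 1)" if "l \<in> {1..k}" for l
      proof -
        have "l = 1 \<or> l = 2" using that k2 by auto
        thus ?thesis using \<open>e 1 = e 2\<close> \<open>e 0 = e 2\<close> by auto
      qed
      hence "\<forall>l \<in> {1..k}. indiff pref (vs l) (e l) (e (l - 1))"
        using compl unfolding indiff_def by metis
      thus ?thesis by blast
    qed
    ultimately show ?thesis by auto
  next
    case k3: True
    define nx where "nx l = (if l = k then 1 else Suc l)" for l
    define S where "S l = strict_pref pref (vs l) (e l) (e (l - 1))" for l
    define T where "T l = strict_pref pref (vs l) (e (l - 1)) (e l)" for l
    have key: "(S l \<longrightarrow> S (nx l)) \<and> (T (nx l) \<longrightarrow> T l)" if l: "l \<in> {1..k}" for l
    proof -
      define m where "m = nx l"
      have m: "m \<in> {1..k}" "m \<noteq> l" using l k3 unfolding m_def nx_def by auto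
      have fe: "e l = {vs l, vs m}" using assms(6,8) l unfolding m_def nx_def by auto
      have em1: "e (m - 1) = e l" using assms(6,8) l unfolding m_def nx_def by auto
      define p where "p = (if l = 1 then k else l - 1)"
      have p: "p \<in> {1..k}" "p \<noteq> l" "p \<noteq> m" using l k3 unfolding p_def m_def nx_def by auto
      have ge: "e (l - 1) = {vs p, vs l}" using assms(6,8) l unfolding p_def by auto
      define q where "q = nx m"
      have q: "q \<in> {1..k}" "q \<noteq> l" "q \<noteq> m" using l m k3 unfolding q_def m_def nx_def by auto
      have he: "e m = {vs m, vs q}" using assms(6,8) m unfolding q_def nx_def by auto
      have vd: "vs p \<noteq> vs l" "vs p \<noteq> vs m" "vs q \<noteq> vs l" "vs q \<noteq> vs m" "vs l \<noteq> vs m"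
        using assms(5) p q m l by (metis inj_on_eq_iff)+
      have gne: "e (l - 1) \<noteq> e l" using ge fe vd by (metis doubleton_eq_iff)
      have hne: "e m \<noteq> e l" using he fe vd by (metis doubleton_eq_iff)
      have fF: "e l \<in> F" using eF l .
      have gF: "e (l - 1) \<in> F" using ge eF[OF p(1)] assms(6,8) p l unfolding p_def
        by (cases "l = 1") auto
      have hF: "e m \<in> F" using eF m by auto
      have vg: "vs l \<in> e (l - 1)" using ge by auto
      have vh: "vs m \<in> e m" using he by auto
      have gen: "S l \<longrightarrow> S m" "T m \<longrightarrow> T l"
        if ss: "nu_stable E E1 E2 pref s" and ms: "matching E s" and ms': "matching E s'"
        and fs: "e l \<in> s' - s" and gs: "e (l - 1) \<in> s" and hs: "e m \<in> s"
        for s s'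
      proof -
        have pg: "partner_edge s (vs l) = e (l - 1)" using partner_eq[OF ms fin gs vg] .
        have ph: "partner_edge s (vs m) = e m" using partner_eq[OF ms fin hs vh] .
        have fE: "e l \<in> E" using fF FE by auto
        show "S l \<longrightarrow> S m"
          using step[OF set ss fE _ fe pg[symmetric] ph[symmetric]] fs em1
          unfolding S_def by auto
        have fe': "e l = {vs m, vs l}" using fe by auto
        show "T m \<longrightarrow> T l"
          using step[OF set ss fE _ fe' ph[symmetric] pg[symmetric]] fs em1
          unfolding T_def by auto
      qed
      have "e l \<in> \<mu> - \<sigma> \<or> e l \<in> \<sigma> - \<mu>" using fF assms(4) by auto
      thus ?thesis
      proof
        assume fm: "e l \<in> \<mu> - \<sigma>"
        have "e (l - 1) \<notin> \<mu>" using match_unique[OF mm(1) fin _ _ vg] fm gne fe by auto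
        hence g: "e (l - 1) \<in> \<sigma>" using gF assms(4) by auto
        have "e m \<notin> \<mu>" using match_unique[OF mm(1) fin _ _ vh] fm hne fe by auto
        hence h: "e m \<in> \<sigma>" using hF assms(4) by auto
        show ?thesis using gen[OF assms(3) mm(2) mm(1) fm g h] unfolding m_def by auto
      next
        assume fm: "e l \<in> \<sigma> - \<mu>"
        have "e (l - 1) \<notin> \<sigma>" using match_unique[OF mm(2) fin _ _ vg] fm gne fe by auto
        hence g: "e (l - 1) \<in> \<mu>" using gF assms(4) by auto
        have "e m \<notin> \<sigma>" using match_unique[OF mm(2) fin _ _ vh] fm hne fe by auto
        hence h: "e m \<in> \<mu>" using hF assms(4) by auto
        show ?thesis using gen[OF assms(2) mm(1) mm(2) fm g h] unfolding m_def by auto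
      qed
    qed
    have kS1: "\<forall>l\<in>{1..<k}. S l \<longrightarrow> S (Suc l)"
    proof
      fix l assume l: "l \<in> {1..<k}"
      hence "l \<in> {1..k}" "nx l = Suc l" unfolding nx_def by auto
      thus "S l \<longrightarrow> S (Suc l)" using key by metis
    qed
    have kS2: "S k \<longrightarrow> S 1" using key[of k] k3 unfolding nx_def by auto
    have kT1: "\<forall>l\<in>{1..<k}. \<not> T l \<longrightarrow> \<not> T (Suc l)"
    proof
      fix l assume l: "l \<in> {1..<k}"
      hence "l \<in> {1..k}" "nx l = Suc l" unfolding nx_def by auto
      thus "\<not> T l \<longrightarrow> \<not> T (Suc l)" using key by metis
    qed
    have kT2: "\<not> T k \<longrightarrow> \<not> T 1" using key[of k] k3 unfolding nx_def by auto
    show ?thesis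
    proof (cases "\<exists>i\<in>{1..k}. S i")
      case True
      then obtain i where "i \<in> {1..k}" "S i" by blast
      from cyc[OF kS1 kS2 this(2,1)] show ?thesis unfolding S_def by blast
    next
      case noS: False
      show ?thesis
      proof (cases "\<exists>i\<in>{1..k}. \<not> T i")
        case True
        then obtain i where "i \<in> {1..k}" "\<not> T i" by blast
        from cyc[of k "\<lambda>l. \<not> T l", OF kT1 kT2 this(2,1)] have "\<forall>j\<in>{1..k}. \<not> T j" .
        hence "\<forall>l \<in> {1..k}. indiff pref (vs l) (e l) (e (l - 1))"
          using noS compl unfolding S_def T_def strict_pref_def indiff_def by blast
        thus ?thesis by blast
      next
        case False thus ?thesis unfolding T_def by blast
      qed
    qed
  qed
qed

end
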